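(* Every rank-one transformation given by a cutting and stacking construction with a bounded number of cuts ($\sup_n r_n<\infty$) is boundedly rationally ergodic (with $F=I$, the level of $C_0$).
   Context: Rank-one transformation by cutting and stacking: $C_0$ is a single level $I$ of positive finite measure; column $C_n$ is cut into $r_n\ge2$ equal-width subcolumns, spacers are placed above subcolumns, and subcolumns are stacked left to right to form $C_{n+1}$; $T$ maps each level to the one above. For $F$ of positive finite measure, $u_k(F)=\mu(F\cap T^kF)/\mu(F)^2$, $a_n(F)=\sum_{k=0}^{n-1}u_k(F)$, $S_n(f)=\sum_{k=0}^{n-1}f\circ T^k$. $T$ is boundedly rationally ergodic if there is $F$ of positive finite measure with $\mu(X\setminus\bigcup_{i\ge0}T^iF)=0$ and $\sup_{n\ge1}\bigl\|\frac{1}{a_n(F)}S_n(1_F)\bigr\|_\infty<\infty$. *)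

theory Defs
  imports "HOL-Analysis.Analysis"
begin

definition ret_u :: "'a measure \<Rightarrow> ('a \<Rightarrow> 'a) \<Rightarrow> 'a set \<Rightarrow> nat \<Rightarrow> real" where
  "ret_u M T F k = measure M (F \<inter> (T ^^ k) ` F) / (measure M F)\<^sup>2"

definition ret_a :: "'a measure \<Rightarrow> ('a \<Rightarrow> 'a) \<Rightarrow> 'a set \<Rightarrow> nat \<Rightarrow> real" where
  "ret_a M T F n = (\<Sum>k<n. ret_u M T F k)"

definition birk_S :: "('a \<Rightarrow> 'a) \<Rightarrow> nat \<Rightarrow> ('a \<Rightarrow> real) \<Rightarrow> 'a \<Rightarrow> real" where
  "birk_S T n f x = (\<Sum>k<n. f ((T ^^ k) x))"

text \<open>Bounded rational ergodicity witnessed by the set F. The condition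
  sup_n || S_n(1_F) / a_n(F) ||_infty < infty is written out: there is a constant C
  bounding all these functions almost everywhere.\<close>
definition bre_wrt :: "'a measure \<Rightarrow> ('a \<Rightarrow> 'a) \<Rightarrow> 'a set \<Rightarrow> bool" where
  "bre_wrt M T F \<longleftrightarrow>
     F \<in> sets M \<and> 0 < emeasure M F \<and> emeasure M F < \<infinity> \<and>
     emeasure M (space M - (\<Union>i. (T ^^ i) ` F)) = 0 \<and>
     (\<exists>C::real. \<forall>n\<ge>1. AE x in M. \<bar>birk_S T n (indicator F) x / ret_a M T F n\<bar> \<le> C)"

text \<open>Parameters: w0 > 0 width of the initial level I = [0, w0); r n number of cuts of
  column C_n; s n j number of spacers placed above subcolumn j (j < r n) of C_n.
  Levels are half-open intervals; spacers of stage n are fresh intervals placed to the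
  right of everything used so far.\<close>

definition rk1_wid :: "real \<Rightarrow> (nat \<Rightarrow> nat) \<Rightarrow> nat \<Rightarrow> real" where
  "rk1_wid w0 r n = w0 / (\<Prod>i<n. real (r i))"

text \<open>Right end of the region [0, end n) occupied by column C_n.\<close>
fun rk1_end :: "real \<Rightarrow> (nat \<Rightarrow> nat) \<Rightarrow> (nat \<Rightarrow> nat \<Rightarrow> nat) \<Rightarrow> nat \<Rightarrow> real" where
  "rk1_end w0 r s 0 = w0"
| "rk1_end w0 r s (Suc n) = rk1_end w0 r s n + real (\<Sum>j<r n. s n j) * rk1_wid w0 r (Suc n)"

text \<open>Left endpoints of the levels of column C_n, listed bottom to top.\<close>
fun rk1_col :: "real \<Rightarrow> (nat \<Rightarrow> nat) \<Rightarrow> (nat \<Rightarrow> nat \<Rightarrow> nat) \<Rightarrow> nat \<Rightarrow> real list" where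
  "rk1_col w0 r s 0 = [0]"
| "rk1_col w0 r s (Suc n) =
     concat (map (\<lambda>j. map (\<lambda>a. a + real j * rk1_wid w0 r (Suc n)) (rk1_col w0 r s n)
                      @ map (\<lambda>k. rk1_end w0 r s n + real ((\<Sum>l<j. s n l) + k) * rk1_wid w0 r (Suc n))
                            [0..<s n j])
                 [0..<r n])"

definition rk1_level :: "real \<Rightarrow> (nat \<Rightarrow> nat) \<Rightarrow> (nat \<Rightarrow> nat \<Rightarrow> nat) \<Rightarrow> nat \<Rightarrow> nat \<Rightarrow> real set" where
  "rk1_level w0 r s n i = {rk1_col w0 r s n ! i ..< rk1_col w0 r s n ! i + rk1_wid w0 r n}"

definition rk1_space :: "real \<Rightarrow> (nat \<Rightarrow> nat) \<Rightarrow> (nat \<Rightarrow> nat \<Rightarrow> nat) \<Rightarrow> real set" where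
  "rk1_space w0 r s = (\<Union>n. \<Union>i\<in>{..<length (rk1_col w0 r s n)}. rk1_level w0 r s n i)"

text \<open>T maps each non-top level of each column by translation onto the level above
  (consistent across stages); on the remaining (null) set it is the identity.\<close>
definition rk1_T :: "real \<Rightarrow> (nat \<Rightarrow> nat) \<Rightarrow> (nat \<Rightarrow> nat \<Rightarrow> nat) \<Rightarrow> real \<Rightarrow> real" where
  "rk1_T w0 r s x =
    (if \<exists>n i. Suc i < length (rk1_col w0 r s n) \<and> x \<in> rk1_level w0 r s n i
     then (let p = (SOME p. Suc (snd p) < length (rk1_col w0 r s (fst p)) \<and> x \<in> rk1_level w0 r s (fst p) (snd p))
           in x - rk1_col w0 r s (fst p) ! snd p + rk1_col w0 r s (fst p) ! Suc (snd p))
     else x)"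

definition rk1_measure :: "real \<Rightarrow> (nat \<Rightarrow> nat) \<Rightarrow> (nat \<Rightarrow> nat \<Rightarrow> nat) \<Rightarrow> real measure" where
  "rk1_measure w0 r s = restrict_space lborel (rk1_space w0 r s)"

end

theory Submission
  imports Defs
begin


fun eN :: "(nat\<Rightarrow>nat) \<Rightarrow> (nat\<Rightarrow>nat\<Rightarrow>nat) \<Rightarrow> nat \<Rightarrow> nat" where
  "eN r s 0 = 1"
| "eN r s (Suc n) = eN r s n * r n + (\<Sum>j<r n. s n j)"

fun cN :: "(nat\<Rightarrow>nat) \<Rightarrow> (nat\<Rightarrow>nat\<Rightarrow>nat) \<Rightarrow> nat \<Rightarrow> nat list" where
  "cN r s 0 = [0]"
| "cN r s (Suc n) = concat (map (\<lambda>j. map (\<lambda>a. a * r n + j) (cN r s n)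
      @ map (\<lambda>k. eN r s n * r n + (\<Sum>l<j. s n l) + k) [0..<s n j]) [0..<r n])"

lemma nth_concat_upt:
  assumes "j < R" "i < length (f j)"
  shows "concat (map f [0..<R]) ! ((\<Sum>l<j. length (f l)) + i) = f j ! i"
  using assms
proof (induction R)
  case 0 then show ?case by simp
next
  case (Suc R)
  have len: "length (concat (map f [0..<R])) = (\<Sum>l<R. length (f l))"
    by (simp add: length_concat sum_list_sum_nth atLeast0LessThan)
  show ?case
  proof (cases "j < R")
    case True
    have "(\<Sum>l<j. length (f l)) + i < (\<Sum>l<Suc j. length (f l))" using Suc.prems by simp
    also have "\<dots> \<le> (\<Sum>l<R. length (f l))" using True by (intro sum_mono2) auto
    finally have "(\<Sum>l<j. length (f l)) + i < length (concat (map f [0..<R]))" using len by simp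
    then show ?thesis using Suc True by (simp add: nth_append)
  next
    case False
    then have "j = R" using Suc.prems by simp
    then show ?thesis using len Suc.prems by (simp add: nth_append)
  qed
qed

lemma length_concat_upt: "length (concat (map f [0..<R])) = (\<Sum>l<R. length (f l))"
  by (simp add: length_concat sum_list_sum_nth atLeast0LessThan)

lemma concat_upt_decomp:
  assumes "p < length (concat (map f [0..<R]))"
  shows "\<exists>j<R. \<exists>i<length (f j). p = (\<Sum>l<j. length (f l)) + i"
  using assms
proof (induction R)
  case 0 then show ?case by simp
next
  case (Suc R)
  show ?case
  proof (cases "p < (\<Sum>l<R. length (f l))")
    case True
    then show ?thesis using Suc.IH[OF True[folded length_concat_upt]] using less_SucI by blast
  next
    case False
    have "p < (\<Sum>l<Suc R. length (f l))" using Suc.prems length_concat_upt by metis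
    then show ?thesis using False
      by (intro exI[of _ R]) (auto intro!: exI[of _ "p - (\<Sum>l<R. length (f l))"])
  qed
qed



locale rk1 =
  fixes w0 :: real and r :: "nat\<Rightarrow>nat" and s :: "nat\<Rightarrow>nat\<Rightarrow>nat"
  assumes w0: "0 < w0" and r2: "\<And>n. 2 \<le> r n"
begin

definition w where "w n = rk1_wid w0 r n"
definition P :: "nat \<Rightarrow> nat" where "P n = (\<Prod>i<n. r i)"
abbreviation c where "c n \<equiv> cN r s n"
abbreviation e where "e n \<equiv> eN r s n"
definition h where "h n = length (c n)"
definition pos where "pos n j = j * h n + (\<Sum>l<j. s n l)"
definition L where "L n i = {real (c n ! i) * w n ..< (real (c n ! i) + 1) * w n}"

lemma r_pos: "0 < r n" using r2[of n] by simp

lemma P_pos: "0 < P n" unfolding P_def using r_pos by (simp add: prod_pos)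

lemma w_pos: "0 < w n"
  unfolding w_def rk1_wid_def using w0 r_pos by (simp add: prod_pos)

lemma w_Suc: "w n = real (r n) * w (Suc n)"
  unfolding w_def rk1_wid_def using r_pos[of n] by (simp add: prod_pos)

lemma P_Suc: "P (Suc n) = P n * r n" unfolding P_def by simp

lemma P_w: "real (P n) * w n = w0"
  unfolding P_def w_def rk1_wid_def using r_pos by (simp add: prod_pos)

lemma w_0: "w 0 = w0" unfolding w_def rk1_wid_def by simp

lemma w_le: "w n \<le> w0 / 2 ^ n"
proof (induction n)
  case 0 then show ?case by (simp add: w_0)
next
  case (Suc n)
  have "2 * w (Suc n) \<le> real (r n) * w (Suc n)"
    using r2[of n] w_pos[of "Suc n"] by (intro mult_right_mono) auto
  then have "2 * w (Suc n) \<le> w n" using w_Suc[of n] by linarith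
  then have "2 * w (Suc n) * 2^n \<le> w n * 2^n" by (intro mult_right_mono) auto
  moreover have "w n * 2^n \<le> w0" using Suc by (simp add: field_simps)
  moreover have "w (Suc n) * 2^(Suc n) = 2 * w (Suc n) * 2^n" by simp
  ultimately have "w (Suc n) * 2^(Suc n) \<le> w0" by linarith
  then show ?case by (simp add: field_simps)
qed

definition bf where "bf n j = map (\<lambda>a. a * r n + j) (c n)
      @ map (\<lambda>k. e n * r n + (\<Sum>l<j. s n l) + k) [0..<s n j]"

lemma c_Suc: "c (Suc n) = concat (map (bf n) [0..<r n])"
  unfolding bf_def[abs_def] cN.simps by (simp add: add.assoc)

lemma len_bf: "length (bf n j) = h n + s n j"
  by (simp add: h_def bf_def)

lemma sum_len_bf: "(\<Sum>l<j. length (bf n l)) = pos n j"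
  unfolding len_bf pos_def by (simp add: sum.distrib)

lemma h_Suc: "h (Suc n) = r n * h n + (\<Sum>j<r n. s n j)"
proof -
  have "h (Suc n) = pos n (r n)"
    unfolding h_def c_Suc length_concat_upt using sum_len_bf[of n "r n"] by simp
  then show ?thesis by (simp add: pos_def)
qed

lemma h_0: "h 0 = 1" by (simp add: h_def)

lemma pos_Suc: "pos n (Suc j) = pos n j + h n + s n j"
  by (simp add: pos_def)

lemma pos_mono: "j < j' \<Longrightarrow> pos n j + h n \<le> pos n j'"
proof (induction j' )
  case 0 then show ?case by simp
next
  case (Suc j') then show ?case by (cases "j = j'") (auto simp: pos_Suc)
qed

lemma pos_le_h: "j < r n \<Longrightarrow> pos n j + h n \<le> h (Suc n)"
proof -
  assume j: "j < r n"
  have "pos n (r n) = h (Suc n)" by (simp add: pos_def h_Suc)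
  moreover have "pos n j + h n \<le> pos n (Suc j) " by (simp add: pos_Suc)
  moreover have "pos n (Suc j) \<le> pos n (r n)"
  proof (cases "Suc j = r n")
    case False
    then have "Suc j < r n" using j by simp
    from pos_mono[OF this, of n] show ?thesis by simp
  qed simp
  ultimately show ?thesis by simp
qed

lemma bf_copy: "i < h n \<Longrightarrow> bf n j ! i = c n ! i * r n + j"
  by (simp add: bf_def nth_append h_def)

lemma bf_spacer: "k < s n j \<Longrightarrow> bf n j ! (h n + k) = e n * r n + (\<Sum>l<j. s n l) + k"
  by (simp add: bf_def nth_append h_def)

lemma c_bf: "j < r n \<Longrightarrow> i < h n + s n j \<Longrightarrow> c (Suc n) ! (pos n j + i) = bf n j ! i"
  unfolding c_Suc using nth_concat_upt[of j "r n" i "bf n"]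
  unfolding sum_len_bf unfolding len_bf by simp

lemma c_copy: "j < r n \<Longrightarrow> i < h n \<Longrightarrow> c (Suc n) ! (pos n j + i) = c n ! i * r n + j"
  using c_bf[of j n i] bf_copy[of i n j] by simp

lemma c_spacer: "j < r n \<Longrightarrow> k < s n j \<Longrightarrow>
    c (Suc n) ! (pos n j + h n + k) = e n * r n + (\<Sum>l<j. s n l) + k"
  using c_bf[of j n "h n + k"] bf_spacer[of k n j] by (simp add: add.assoc)

lemma decomp:
  assumes "p < h (Suc n)"
  shows "(\<exists>j<r n. \<exists>i<h n. p = pos n j + i) \<or> (\<exists>j<r n. \<exists>k<s n j. p = pos n j + h n + k)"
proof -
  from assms have "p < length (concat (map (bf n) [0..<r n]))"
    unfolding h_def c_Suc .
  from concat_upt_decomp[OF this] obtain j i where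
    ji0: "j < r n" "i < length (bf n j)" "p = (\<Sum>l<j. length (bf n l)) + i" by blast
  have ji: "j < r n" "i < h n + s n j" "p = pos n j + i"
    using ji0 unfolding sum_len_bf unfolding len_bf by simp_all
  show ?thesis
  proof (cases "i < h n")
    case True then show ?thesis using ji by blast
  next
    case False
    then have "p = pos n j + h n + (i - h n)" "i - h n < s n j" using ji by simp_all
    then show ?thesis using ji(1) by blast
  qed
qed

end

context rk1 begin

lemma sum_s_lt: "j < r n \<Longrightarrow> k < s n j \<Longrightarrow> (\<Sum>l<j. s n l) + k < (\<Sum>l<r n. s n l)"
proof -
  assume a: "j < r n" "k < s n j"
  have "(\<Sum>l<j. s n l) + k < (\<Sum>l<Suc j. s n l)" using a by simp
  also have "\<dots> \<le> (\<Sum>l<r n. s n l)" using a by (intro sum_mono2) auto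
  finally show ?thesis .
qed

lemma c_lt_e: "i < h n \<Longrightarrow> c n ! i < e n"
proof (induction n arbitrary: i)
  case 0 then show ?case by (simp add: h_def)
next
  case (Suc n)
  from decomp[OF Suc.prems] show ?case
  proof
    assume "\<exists>j<r n. \<exists>i'<h n. i = pos n j + i'"
    then obtain j i' where ji: "j < r n" "i' < h n" "i = pos n j + i'" by blast
    have "c n ! i' < e n" using Suc.IH ji by blast
    then have "c n ! i' + 1 \<le> e n" by simp
    then have "(c n ! i' + 1) * r n \<le> e n * r n" by (rule mult_right_mono) simp
    then have "c n ! i' * r n + j < e n * r n" using ji(1) by (simp add: algebra_simps)
    then show ?thesis using ji c_copy by simp
  next
    assume "\<exists>j<r n. \<exists>k<s n j. i = pos n j + h n + k"
    then obtain j k where jk: "j < r n" "k < s n j" "i = pos n j + h n + k" by blast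
    show ?thesis using jk c_spacer[OF jk(1,2)] sum_s_lt[OF jk(1,2)] by simp
  qed
qed

lemma P_le_e: "P n \<le> e n"
proof (induction n)
  case 0 then show ?case by (simp add: P_def)
next
  case (Suc n)
  have "P n * r n \<le> e n * r n" using Suc by (rule mult_right_mono) simp
  then show ?case unfolding P_Suc eN.simps by linarith
qed

lemma c_inj: "i < h n \<Longrightarrow> i' < h n \<Longrightarrow> c n ! i = c n ! i' \<Longrightarrow> i = i'"
proof (induction n arbitrary: i i')
  case 0 then show ?case by (simp add: h_def)
next
  case (Suc n)
  note cp = c_copy c_spacer
  from decomp[OF Suc.prems(1)] decomp[OF Suc.prems(2)] show ?case
  proof (elim disjE exE conjE)
    fix j a j' a' assume h: "j < r n" "a < h n" "i = pos n j + a" "j' < r n" "a' < h n" "i' = pos n j' + a'"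
    then have eq: "c n ! a * r n + j = c n ! a' * r n + j'" using Suc.prems c_copy by simp
    then have "(c n ! a * r n + j) mod r n = (c n ! a' * r n + j') mod r n" by simp
    then have "j = j'" using h by simp
    then have "c n ! a = c n ! a'" using eq r_pos[of n] by simp
    then have "a = a'" using Suc.IH h by blast
    then show ?thesis using h \<open>j = j'\<close> by simp
  next
    fix j a j' k assume h: "j < r n" "a < h n" "i = pos n j + a" "j' < r n" "k < s n j'" "i' = pos n j' + h n + k"
    have "c n ! a < e n" using c_lt_e h by blast
    then have "c n ! a + 1 \<le> e n" by simp
    then have "(c n ! a + 1) * r n \<le> e n * r n" by (rule mult_right_mono) simp
    then have "c n ! a * r n + j < e n * r n" using h(1) by (simp add: algebra_simps)
    moreover have "c (Suc n) ! i = c n ! a * r n + j" using h c_copy by simp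
    moreover have "c (Suc n) ! i' = e n * r n + (\<Sum>l<j'. s n l) + k" using h c_spacer by simp
    ultimately show ?thesis using Suc.prems by simp
  next
    fix j k j' a assume h: "j < r n" "k < s n j" "i = pos n j + h n + k" "j' < r n" "a < h n" "i' = pos n j' + a"
    have "c n ! a < e n" using c_lt_e h by blast
    then have "c n ! a + 1 \<le> e n" by simp
    then have "(c n ! a + 1) * r n \<le> e n * r n" by (rule mult_right_mono) simp
    then have "c n ! a * r n + j' < e n * r n" using h(4) by (simp add: algebra_simps)
    moreover have "c (Suc n) ! i' = c n ! a * r n + j'" using h c_copy by simp
    moreover have "c (Suc n) ! i = e n * r n + (\<Sum>l<j. s n l) + k" using h c_spacer by simp
    ultimately show ?thesis using Suc.prems by simp
  next
    fix j k j' k' assume h: "j < r n" "k < s n j" "i = pos n j + h n + k" "j' < r n" "k' < s n j'" "i' = pos n j' + h n + k'"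
    have eq: "(\<Sum>l<j. s n l) + k = (\<Sum>l<j'. s n l) + k'"
      using h c_spacer Suc.prems by simp
    have "j = j'"
    proof (rule ccontr)
      assume "j \<noteq> j'"
      moreover
      { fix j j' k k' assume a: "j < j'" "k < s n j"
        have "(\<Sum>l<j. s n l) + k < (\<Sum>l<Suc j. s n l)" using a by simp
        also have "\<dots> \<le> (\<Sum>l<j'. s n l)" using a by (intro sum_mono2) auto
        finally have "(\<Sum>l<j. s n l) + k \<noteq> (\<Sum>l<j'. s n l) + k'" by simp }
      ultimately show False using eq h by (metis linorder_neqE_nat)
    qed
    then show ?thesis using eq h by simp
  qed
qed

lemma L_disj: "i < h n \<Longrightarrow> i' < h n \<Longrightarrow> x \<in> L n i \<Longrightarrow> x \<in> L n i' \<Longrightarrow> i = i'"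
proof -
  assume a: "i < h n" "i' < h n" "x \<in> L n i" "x \<in> L n i'"
  have "c n ! i = c n ! i'"
  proof (rule ccontr)
    assume ne: "c n ! i \<noteq> c n ! i'"
    { fix p q :: nat assume "p < q" "x \<in> {real p * w n ..< (real p + 1) * w n}"
        "x \<in> {real q * w n ..< (real q + 1) * w n}"
      then have "(real p + 1) * w n \<le> real q * w n" using w_pos[of n]
        by (intro mult_right_mono) auto
      with \<open>x \<in> {real p * w n ..< (real p + 1) * w n}\<close> \<open>x \<in> {real q * w n ..< _}\<close>
      have False by simp }
    then show False using ne a unfolding L_def by (metis linorder_neqE_nat)
  qed
  then show ?thesis using c_inj a by blast
qed

lemma L_sub: "j < r n \<Longrightarrow> i < h n \<Longrightarrow> L (Suc n) (pos n j + i) \<subseteq> L n i"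
proof -
  assume a: "j < r n" "i < h n"
  let ?a = "c n ! i" and ?v = "w (Suc n)"
  have v: "0 < ?v" by (rule w_pos)
  have wn: "w n = real (r n) * ?v" by (rule w_Suc)
  have "real ?a * w n \<le> real (?a * r n + j) * ?v"
    unfolding wn using v by (simp add: algebra_simps)
  moreover have "(real (?a * r n + j) + 1) * ?v \<le> (real ?a + 1) * w n"
  proof -
    have "real j + 1 \<le> real (r n)" using a by simp
    then have "(real j + 1) * ?v \<le> real (r n) * ?v" using v by (intro mult_right_mono) auto
    then show ?thesis unfolding wn by (simp add: algebra_simps)
  qed
  ultimately show ?thesis unfolding L_def using c_copy[OF a] by auto
qed

lemma L_refine:
  assumes "i < h n" "x \<in> L n i"
  shows "\<exists>j<r n. x \<in> L (Suc n) (pos n j + i)"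
proof -
  let ?a = "c n ! i" and ?v = "w (Suc n)"
  have v: "0 < ?v" by (rule w_pos)
  have wn: "w n = real (r n) * ?v" by (rule w_Suc)
  define f where "f = floor (x / ?v)"
  have x1: "real ?a * w n \<le> x" "x < (real ?a + 1) * w n" using assms(2) unfolding L_def by auto
  have "real ?a * real (r n) \<le> x / ?v" using x1(1) v unfolding wn by (simp add: field_simps)
  then have f1: "int (?a * r n) \<le> f" unfolding f_def by (simp add: le_floor_iff)
  have "x / ?v < (real ?a + 1) * real (r n)" using x1(2) v unfolding wn by (simp add: field_simps)
  moreover have "(real ?a + 1) * real (r n) = real ((?a + 1) * r n)" by (simp add: algebra_simps)
  ultimately have "x / ?v < real ((?a + 1) * r n)" by simp
  then have f2: "f < int ((?a + 1) * r n)" unfolding f_def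
    by (simp add: floor_less_iff)
  define j where "j = nat (f - int (?a * r n))"
  have j: "j < r n" using f1 f2 unfolding j_def by (simp add: algebra_simps)
  have fj: "f = int (?a * r n + j)" using f1 unfolding j_def by simp
  have "real_of_int f \<le> x / ?v" unfolding f_def by (rule of_int_floor_le)
  then have "real (?a * r n + j) \<le> x / ?v" unfolding fj by simp
  then have "real (?a * r n + j) * ?v \<le> x" using v by (simp add: field_simps)
  moreover have "x < (real (?a * r n + j) + 1) * ?v"
  proof -
    have "x / ?v < real_of_int f + 1" unfolding f_def by (rule real_of_int_floor_add_one_gt)
    then have "x / ?v < real (?a * r n + j) + 1" unfolding fj by simp
    then show ?thesis using v by (simp add: field_simps)
  qed
  ultimately have "x \<in> L (Suc n) (pos n j + i)" unfolding L_def using c_copy[OF j assms(1)] by simp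
  then show ?thesis using j by blast
qed

end

context rk1 begin

lemma e_w: "rk1_end w0 r s n = real (e n) * w n"
proof (induction n)
  case 0 then show ?case by (simp add: w_0)
next
  case (Suc n)
  have "rk1_wid w0 r (Suc n) = w (Suc n)" by (simp add: w_def)
  then show ?case using Suc w_Suc[of n] by (simp add: algebra_simps)
qed

lemma bf_real: "map (\<lambda>a. a + real j * w (Suc n)) (map (\<lambda>x. real x * w n) (c n)) @
   map (\<lambda>k. rk1_end w0 r s n + real (sum (s n) {..<j} + k) * w (Suc n)) [0..<s n j]
   = map (\<lambda>x. real x * w (Suc n)) (bf n j)"
proof -
  have 1: "map (\<lambda>a. a + real j * w (Suc n)) (map (\<lambda>x. real x * w n) (c n))
      = map (\<lambda>a. real (a * r n + j) * w (Suc n)) (c n)"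
    unfolding map_map o_def w_Suc[of n] by (intro map_cong refl) (simp add: algebra_simps)
  have 2: "map (\<lambda>k. rk1_end w0 r s n + real (sum (s n) {..<j} + k) * w (Suc n)) [0..<s n j]
      = map (\<lambda>k. real (e n * r n + (\<Sum>l<j. s n l) + k) * w (Suc n)) [0..<s n j]"
    unfolding e_w w_Suc[of n] by (intro map_cong refl) (simp add: algebra_simps)
  show ?thesis unfolding 1 2 bf_def by simp
qed

lemma col_eq: "rk1_col w0 r s n = map (\<lambda>x. real x * w n) (c n)"
proof (induction n)
  case 0 then show ?case by simp
next
  case (Suc n)
  have ww: "rk1_wid w0 r (Suc n) = w (Suc n)" by (simp add: w_def)
  show ?case
    unfolding rk1_col.simps Suc ww unfolding bf_real unfolding c_Suc map_concat map_map comp_def ..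
qed

lemma h_len: "length (rk1_col w0 r s n) = h n"
  by (simp add: col_eq h_def)

lemma col_nth: "i < h n \<Longrightarrow> rk1_col w0 r s n ! i = real (c n ! i) * w n"
  by (simp add: col_eq h_def)

lemma level_eq: "i < h n \<Longrightarrow> rk1_level w0 r s n i = L n i"
  unfolding rk1_level_def L_def col_nth
  by (simp add: col_nth w_def algebra_simps)

lemma space_eq: "rk1_space w0 r s = (\<Union>n. \<Union>i<h n. L n i)"
  unfolding rk1_space_def h_len using level_eq by auto

definition D where "D n i = (real (c n ! Suc i) - real (c n ! i)) * w n"

lemma D_refine: "Suc i < h n \<Longrightarrow> j < r n \<Longrightarrow> D (Suc n) (pos n j + i) = D n i"
proof -
  assume a: "Suc i < h n" "j < r n"
  have "c (Suc n) ! Suc (pos n j + i) = c n ! Suc i * r n + j"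
    using c_copy[of j n "Suc i"] a by simp
  moreover have "c (Suc n) ! (pos n j + i) = c n ! i * r n + j"
    using c_copy[of j n i] a by simp
  ultimately show ?thesis unfolding D_def w_Suc[of n] by (simp add: algebra_simps)
qed

lemma propagate:
  assumes "x \<in> L n i" "Suc i < h n"
  shows "\<exists>i'. x \<in> L (n + d) i' \<and> Suc i' < h (n + d) \<and> D (n + d) i' = D n i"
proof (induction d)
  case 0 then show ?case using assms by auto
next
  case (Suc d)
  then obtain i' where i': "x \<in> L (n + d) i'" "Suc i' < h (n + d)" "D (n + d) i' = D n i" by blast
  from L_refine[of i' "n+d" x] i' obtain j where j: "j < r (n+d)" "x \<in> L (Suc (n + d)) (pos (n+d) j + i')"
    by auto
  have "Suc (pos (n+d) j + i') < h (Suc (n+d))" using pos_le_h[OF j(1)] i'(2) by simp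
  moreover have "D (Suc (n + d)) (pos (n+d) j + i') = D n i" using D_refine[OF i'(2) j(1)] i'(3) by simp
  ultimately show ?case using j by (intro exI[of _ "pos (n+d) j + i'"]) simp
qed

lemma D_consistent:
  assumes "x \<in> L n i" "Suc i < h n" "x \<in> L n' i'" "Suc i' < h n'"
  shows "D n i = D n' i'"
proof -
  { fix n i n' i' assume a: "x \<in> L n i" "Suc i < h n" "x \<in> L n' i'" "Suc i' < h n'" "n \<le> n'"
    from propagate[OF a(1,2), of "n' - n"] a(5) obtain i'' where
      "x \<in> L n' i''" "Suc i'' < h n'" "D n' i'' = D n i" by auto
    with a have "i'' = i'" using L_disj[of i'' n' i' x] by simp
    with \<open>D n' i'' = D n i\<close> have "D n i = D n' i'" by simp }
  then show ?thesis using assms by (metis nle_le)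
qed

abbreviation T where "T \<equiv> rk1_T w0 r s"

lemma T_step:
  assumes "x \<in> L n i" "Suc i < h n"
  shows "T x = x + D n i"
proof -
  let ?Q = "\<lambda>p. Suc (snd p) < length (rk1_col w0 r s (fst p)) \<and> x \<in> rk1_level w0 r s (fst p) (snd p)"
  have ex: "\<exists>n i. Suc i < length (rk1_col w0 r s n) \<and> x \<in> rk1_level w0 r s n i"
    using assms level_eq[of i n] h_len[of n] by (intro exI[of _ n] exI[of _ i]) simp
  have "\<exists>p. ?Q p" using ex by auto
  then have Qp: "?Q (SOME p. ?Q p)" by (rule someI_ex)
  define p where "p = (SOME p. ?Q p)"
  have p1: "Suc (snd p) < h (fst p)" and p2: "x \<in> L (fst p) (snd p)"
    using Qp level_eq[of "snd p" "fst p"] h_len[of "fst p"] unfolding p_def[symmetric] by auto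
  have "T x = x - rk1_col w0 r s (fst p) ! snd p + rk1_col w0 r s (fst p) ! Suc (snd p)"
    unfolding rk1_T_def using ex by (simp add: Let_def p_def)
  also have "\<dots> = x + D (fst p) (snd p)"
    unfolding D_def using p1 col_nth[of "snd p" "fst p"] col_nth[of "Suc (snd p)" "fst p"]
    by (simp add: algebra_simps)
  also have "D (fst p) (snd p) = D n i" using D_consistent[OF p2 p1 assms] .
  finally show ?thesis .
qed

lemma shiftL: "x \<in> L n i \<Longrightarrow> x + (real (c n ! i') - real (c n ! i)) * w n \<in> L n i'"
  unfolding L_def by (auto simp: algebra_simps)

lemma T_iter:
  assumes "x \<in> L n i" "i + j < h n"
  shows "(T ^^ j) x = x + (real (c n ! (i + j)) - real (c n ! i)) * w n"
  using assms(2)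
proof (induction j)
  case 0 then show ?case by simp
next
  case (Suc j)
  have IH: "(T ^^ j) x = x + (real (c n ! (i + j)) - real (c n ! i)) * w n" using Suc by simp
  have mem: "(T ^^ j) x \<in> L n (i + j)" unfolding IH by (rule shiftL[OF assms(1)])
  have "(T ^^ Suc j) x = (T ^^ j) x + D n (i + j)"
    using T_step[OF mem] Suc.prems by simp
  then show ?case unfolding IH D_def by (simp add: algebra_simps)
qed

lemma T_iter_mem:
  assumes "x \<in> L n i" "i + j < h n"
  shows "(T ^^ j) x \<in> L n (i + j)"
  unfolding T_iter[OF assms] by (rule shiftL[OF assms(1)])

end

context rk1 begin

definition F where "F = L 0 0"

lemma F_eq: "F = {0..<w0}" unfolding F_def L_def by (simp add: w_0)

lemma F_level0: "rk1_level w0 r s 0 0 = F" unfolding F_def using level_eq[of 0 0] h_0 by simp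

lemma FL_sub: "c n ! p < P n \<Longrightarrow> L n p \<subseteq> F"
proof -
  assume a: "c n ! p < P n"
  then have "real (c n ! p) + 1 \<le> real (P n)" by linarith
  then have "(real (c n ! p) + 1) * w n \<le> real (P n) * w n" using w_pos[of n] by (intro mult_right_mono) auto
  then show ?thesis unfolding F_eq L_def P_w using w_pos[of n] by auto
qed

lemma nFL_disj: "\<not> c n ! p < P n \<Longrightarrow> L n p \<inter> F = {}"
proof -
  assume a: "\<not> c n ! p < P n"
  then have "real (P n) \<le> real (c n ! p)" by linarith
  then have "real (P n) * w n \<le> real (c n ! p) * w n" using w_pos[of n] by (intro mult_right_mono) auto
  then show ?thesis unfolding F_eq L_def P_w by auto
qed

lemma in_F_FL: "x \<in> L n p \<Longrightarrow> x \<in> F \<Longrightarrow> c n ! p < P n"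
  using nFL_disj by blast

lemma level_push:
  assumes "x \<in> L n i" "i < h n"
  shows "\<exists>i'<h (n + d). x \<in> L (n + d) i'"
proof (induction d)
  case 0 then show ?case using assms by auto
next
  case (Suc d)
  then obtain i' where i': "i' < h (n + d)" "x \<in> L (n + d) i'" by blast
  from L_refine[OF i'] obtain j where j: "j < r (n+d)" "x \<in> L (Suc (n + d)) (pos (n+d) j + i')" by blast
  have "pos (n+d) j + i' < h (Suc (n+d))" using pos_le_h[OF j(1)] i'(1) by simp
  then show ?case using j by auto
qed

lemma F_level: "x \<in> F \<Longrightarrow> \<exists>i<h n. x \<in> L n i"
  using level_push[of x 0 0 n] h_0 unfolding F_def by simp

lemma c_zero: "0 < h n \<and> c n ! 0 = 0"
proof (induction n)
  case 0 then show ?case by (simp add: h_def)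
next
  case (Suc n)
  have p0: "pos n 0 = 0" by (simp add: pos_def)
  have "0 < r n" by (rule r_pos)
  then have "c (Suc n) ! (pos n 0 + 0) = c n ! 0 * r n + 0" using c_copy Suc by blast
  moreover have "pos n 0 + h n \<le> h (Suc n)" using pos_le_h r_pos by blast
  ultimately show ?case using Suc p0 by simp
qed

lemma h_ge: "2 ^ n \<le> h n"
proof (induction n)
  case 0 then show ?case by (simp add: h_0)
next
  case (Suc n)
  have "2 * h n \<le> r n * h n" using r2[of n] by (intro mult_right_mono) auto
  then show ?case using Suc unfolding h_Suc power_Suc by linarith
qed

lemma c_surj: "a < P n \<Longrightarrow> \<exists>t<h n. c n ! t = a"
proof (induction n arbitrary: a)
  case 0 then show ?case by (simp add: P_def h_def)
next
  case (Suc n)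
  have rp: "0 < r n" by (rule r_pos)
  have "a div r n < P n" using Suc.prems unfolding P_Suc using rp
    by (simp add: div_less_iff_less_mult)
  then obtain t where t: "t < h n" "c n ! t = a div r n" using Suc.IH by blast
  have jm: "a mod r n < r n" using rp by simp
  have "c (Suc n) ! (pos n (a mod r n) + t) = a" using c_copy[OF jm t(1)] t(2) by simp
  moreover have "pos n (a mod r n) + t < h (Suc n)" using pos_le_h[OF jm] t(1) by simp
  ultimately show ?case by blast
qed

definition FS where "FS n = {t. t < h n \<and> c n ! t < P n}"

lemma FS_finite: "finite (FS n)" unfolding FS_def by simp

lemma card_FS_le: "card (FS n) \<le> P n"
proof -
  have "inj_on (\<lambda>t. c n ! t) (FS n)" unfolding FS_def inj_on_def using c_inj by blast
  moreover have "(\<lambda>t. c n ! t) ` FS n \<subseteq> {..<P n}" unfolding FS_def by auto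
  ultimately show ?thesis using card_inj_on_le[of "\<lambda>t. c n ! t" "FS n" "{..<P n}"] by simp
qed

lemma card_FS_ge: "P n \<le> card (FS n)"
proof -
  have "{..<P n} \<subseteq> (\<lambda>t. c n ! t) ` FS n" unfolding FS_def using c_surj by force
  then have "card {..<P n} \<le> card ((\<lambda>t. c n ! t) ` FS n)" by (intro card_mono) (auto simp: FS_finite)
  also have "\<dots> \<le> card (FS n)" by (rule card_image_le[OF FS_finite])
  finally show ?thesis by simp
qed

fun blk :: "nat \<Rightarrow> nat \<Rightarrow> nat set" where
  "blk n 0 = {0}"
| "blk n (Suc d) = (\<lambda>(j, q). pos (n + d) j + q) ` ({..<r (n + d)} \<times> blk n d)"

lemma blk_a: "q \<in> blk n d \<Longrightarrow> q + h n \<le> h (n + d) \<and> (\<forall>t<h n. L (n + d) (q + t) \<subseteq> L n t)"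
proof (induction d arbitrary: q)
  case 0 then show ?case by simp
next
  case (Suc d)
  then obtain j q0 where jq: "j < r (n + d)" "q0 \<in> blk n d" "q = pos (n + d) j + q0" by auto
  from Suc.IH[OF jq(2)] have ih: "q0 + h n \<le> h (n + d)" "\<forall>t<h n. L (n + d) (q0 + t) \<subseteq> L n t" by auto
  have "q + h n \<le> h (Suc (n + d))" using pos_le_h[OF jq(1)] ih(1) jq(3) by simp
  moreover have "L (Suc (n + d)) (q + t) \<subseteq> L n t" if "t < h n" for t
  proof -
    have "q0 + t < h (n + d)" using ih(1) that by simp
    then have "L (Suc (n + d)) (pos (n + d) j + (q0 + t)) \<subseteq> L (n + d) (q0 + t)"
      using L_sub[OF jq(1)] by blast
    then show ?thesis using ih(2) that jq(3) by (simp add: add.assoc) blast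
  qed
  ultimately show ?case by simp
qed

lemma blk_b: "q \<in> blk n d \<Longrightarrow> q' \<in> blk n d \<Longrightarrow> q < q' \<Longrightarrow> q + h n \<le> q'"
proof (induction d arbitrary: q q')
  case 0 then show ?case by simp
next
  case (Suc d)
  from Suc.prems obtain j q0 where jq: "j < r (n + d)" "q0 \<in> blk n d" "q = pos (n + d) j + q0" by auto
  from Suc.prems obtain j' q0' where jq': "j' < r (n + d)" "q0' \<in> blk n d" "q' = pos (n + d) j' + q0'" by auto
  have b0: "q0 + h n \<le> h (n + d)" "q0' + h n \<le> h (n + d)" using blk_a jq(2) jq'(2) by auto
  consider "j = j'" | "j < j'" | "j' < j" by linarith
  then show ?case
  proof cases
    case 1 then show ?thesis using Suc.IH[OF jq(2) jq'(2)] Suc.prems jq jq' by simp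
  next
    case 2 then show ?thesis using pos_mono[OF 2, of "n + d"] b0 jq jq' by simp
  next
    case 3 then show ?thesis using pos_mono[OF 3, of "n + d"] b0 jq jq' Suc.prems by simp
  qed
qed

lemma blk_c: "p < h (n + d) \<Longrightarrow> c (n + d) ! p < P (n + d) \<Longrightarrow> \<exists>q\<in>blk n d. q \<le> p \<and> p < q + h n"
proof (induction d arbitrary: p)
  case 0 then show ?case by simp
next
  case (Suc d)
  let ?K = "n + d"
  have pp: "p < h (Suc ?K)" using Suc.prems(1) by simp
  from decomp[OF pp] show ?case
  proof (elim disjE exE conjE)
    fix j i assume a: "j < r ?K" "i < h ?K" "p = pos ?K j + i"
    have "c (Suc ?K) ! p = c ?K ! i * r ?K + j" using c_copy a by simp
    then have "c ?K ! i * r ?K + j < P ?K * r ?K" using Suc.prems(2) P_Suc by simp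
    then have "c ?K ! i < P ?K"
      by (metis add_lessD1 mult_less_cancel2)
    from Suc.IH[OF a(2) this] obtain q where q: "q \<in> blk n d" "q \<le> i" "i < q + h n" by blast
    have "pos ?K j + q \<in> blk n (Suc d)" using q(1) a(1) by auto
    then show ?thesis using q a(3) by (intro bexI[of _ "pos ?K j + q"]) auto
  next
    fix j k assume a: "j < r ?K" "k < s ?K j" "p = pos ?K j + h ?K + k"
    have "c (Suc ?K) ! p = e ?K * r ?K + (\<Sum>l<j. s ?K l) + k" using c_spacer a by simp
    moreover have "P ?K * r ?K \<le> e ?K * r ?K" using P_le_e by (intro mult_right_mono) auto
    moreover have "c (Suc ?K) ! p < P (Suc ?K)" using Suc.prems(2) by (simp del: cN.simps)
    ultimately have False unfolding P_Suc by linarith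
    then show ?thesis ..
  qed
qed

lemma blk_FL: "q \<in> blk n d \<Longrightarrow> t < h n \<Longrightarrow> c (n + d) ! (q + t) < P (n + d) \<Longrightarrow> c n ! t < P n"
proof -
  assume a: "q \<in> blk n d" "t < h n" "c (n + d) ! (q + t) < P (n + d)"
  have sub: "L (n + d) (q + t) \<subseteq> L n t" using blk_a[OF a(1)] a(2) by blast
  have "L (n + d) (q + t) \<subseteq> F" using FL_sub[OF a(3)] .
  moreover have "real (c (n + d) ! (q + t)) * w (n + d) \<in> L (n + d) (q + t)"
    unfolding L_def using w_pos[of "n+d"] by simp
  ultimately show ?thesis using sub nFL_disj by blast
qed

lemma card_one_block:
  assumes "q0 \<in> blk n d"
    and "A \<subseteq> {p. q0 \<le> p \<and> p < q0 + h n \<and> c (n + d) ! p < P (n + d)}"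
  shows "card A \<le> P n"
proof -
  have "A \<subseteq> (\<lambda>t. q0 + t) ` FS n"
  proof
    fix p assume "p \<in> A"
    then have p: "q0 \<le> p" "p < q0 + h n" "c (n + d) ! p < P (n + d)" using assms(2) by auto
    have "c n ! (p - q0) < P n" using blk_FL[OF assms(1), of "p - q0"] p by simp
    then have "p - q0 \<in> FS n" using p unfolding FS_def by simp
    then show "p \<in> (\<lambda>t. q0 + t) ` FS n" using p(1) by (intro image_eqI[of _ _ "p - q0"]) auto
  qed
  then have "card A \<le> card ((\<lambda>t. q0 + t) ` FS n)" by (intro card_mono) (auto simp: FS_finite)
  also have "\<dots> \<le> card (FS n)" by (rule card_image_le[OF FS_finite])
  finally show ?thesis using card_FS_le[of n] by simp
qed

lemma window_count:
  assumes "m \<le> h n"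
  shows "card {p. i \<le> p \<and> p < i + m \<and> p < h (n + d) \<and> c (n + d) ! p < P (n + d)} \<le> 2 * P n"
proof -
  define W where "W = {p. i \<le> p \<and> p < i + m \<and> p < h (n + d) \<and> c (n + d) ! p < P (n + d)}"
  define W1 where "W1 = {p\<in>W. \<exists>q\<in>blk n d. q \<le> p \<and> p < q + h n \<and> q \<le> i}"
  define W2 where "W2 = {p\<in>W. \<exists>q\<in>blk n d. q \<le> p \<and> p < q + h n \<and> i < q}"
  have WU: "W \<subseteq> W1 \<union> W2"
  proof
    fix p assume p: "p \<in> W"
    then obtain q where q: "q \<in> blk n d" "q \<le> p" "p < q + h n" using blk_c unfolding W_def by blast
    show "p \<in> W1 \<union> W2"
    proof (cases "q \<le> i")
      case True then have "p \<in> W1" using p q unfolding W1_def by blast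
      then show ?thesis by simp
    next
      case False then have "p \<in> W2" using p q unfolding W2_def by (simp add: not_le) blast
      then show ?thesis by simp
    qed
  qed
  have fin: "finite W1" "finite W2" unfolding W1_def W2_def W_def by auto
  have c1: "card W1 \<le> P n"
  proof (cases "W1 = {}")
    case True then show ?thesis by simp
  next
    case False
    then obtain p0 q0 where q0: "p0 \<in> W" "q0 \<in> blk n d" "q0 \<le> p0" "p0 < q0 + h n" "q0 \<le> i"
      unfolding W1_def by blast
    have "W1 \<subseteq> {p. q0 \<le> p \<and> p < q0 + h n \<and> c (n + d) ! p < P (n + d)}"
    proof
      fix p assume "p \<in> W1"
      then obtain q where q: "p \<in> W" "q \<in> blk n d" "q \<le> p" "p < q + h n" "q \<le> i"
        unfolding W1_def by blast
      have "q = q0"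
      proof (rule ccontr)
        assume "q \<noteq> q0"
        then consider "q < q0" | "q0 < q" by linarith
        then show False
        proof cases
          case 1 then have "q + h n \<le> q0" using blk_b q q0 by blast
          then show False using q q0 unfolding W_def by simp
        next
          case 2 then have "q0 + h n \<le> q" using blk_b q q0 by blast
          then show False using q q0 unfolding W_def by simp
        qed
      qed
      then show "p \<in> {p. q0 \<le> p \<and> p < q0 + h n \<and> c (n + d) ! p < P (n + d)}"
        using q unfolding W_def by simp
    qed
    then show ?thesis using card_one_block[OF q0(2)] by blast
  qed
  have c2: "card W2 \<le> P n"
  proof (cases "W2 = {}")
    case True then show ?thesis by simp
  next
    case False
    then obtain p0 q0 where q0: "p0 \<in> W" "q0 \<in> blk n d" "q0 \<le> p0" "p0 < q0 + h n" "i < q0"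
      unfolding W2_def by blast
    have "W2 \<subseteq> {p. q0 \<le> p \<and> p < q0 + h n \<and> c (n + d) ! p < P (n + d)}"
    proof
      fix p assume "p \<in> W2"
      then obtain q where q: "p \<in> W" "q \<in> blk n d" "q \<le> p" "p < q + h n" "i < q"
        unfolding W2_def by blast
      have "q = q0"
      proof (rule ccontr)
        assume "q \<noteq> q0"
        then consider "q < q0" | "q0 < q" by linarith
        then show False
        proof cases
          case 1 then have "q + h n \<le> q0" using blk_b q q0 by blast
          then show False using q q0 assms unfolding W_def by simp
        next
          case 2 then have "q0 + h n \<le> q" using blk_b q q0 by blast
          then show False using q q0 assms unfolding W_def by simp
        qed
      qed
      then show "p \<in> {p. q0 \<le> p \<and> p < q0 + h n \<and> c (n + d) ! p < P (n + d)}"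
        using q unfolding W_def by simp
    qed
    then show ?thesis using card_one_block[OF q0(2)] by blast
  qed
  have "card W \<le> card (W1 \<union> W2)" using WU fin by (intro card_mono) auto
  also have "\<dots> \<le> card W1 + card W2" by (rule card_Un_le)
  finally show ?thesis using c1 c2 unfolding W_def by simp
qed

end

context rk1 begin

lemma small_w: "0 < \<epsilon> \<Longrightarrow> \<exists>d. w (K + d) < \<epsilon>"
proof -
  assume eps: "0 < \<epsilon>"
  obtain d where d: "w0 / \<epsilon> < 2 ^ d" using real_arch_pow[of 2 "w0 / \<epsilon>"] by auto
  have "w (K + d) \<le> w0 / 2 ^ (K + d)" by (rule w_le)
  also have "\<dots> \<le> w0 / 2 ^ d" using w0 by (intro divide_left_mono) (auto simp: power_add)
  also have "\<dots> < \<epsilon>" using d eps w0 by (simp add: field_simps)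
  finally show ?thesis by blast
qed

lemma F_good:
  assumes x: "x \<in> F"
  shows "\<exists>K i. i < h K \<and> x \<in> L K i \<and> i + k < h K"
proof (rule ccontr)
  assume H0: "\<not> ?thesis"
  then have H: "\<And>K i. i < h K \<Longrightarrow> x \<in> L K i \<Longrightarrow> h K \<le> i + k" by force
  obtain i0 where i0: "i0 < h k" "x \<in> L k i0" using F_level[OF x] by blast
  define R where "R = (real (c k ! i0) + 1) * w k"
  have claim: "\<exists>i<h (k + d). x \<in> L (k + d) i \<and> (real (c (k + d) ! i) + 1) * w (k + d) = R" for d
  proof (induction d)
    case 0 then show ?case using i0 R_def by auto
  next
    case (Suc d)
    let ?K = "k + d"
    from Suc obtain i where i: "i < h ?K" "x \<in> L ?K i" "(real (c ?K ! i) + 1) * w ?K = R" by blast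
    from L_refine[OF i(1,2)] obtain j where j: "j < r ?K" "x \<in> L (Suc ?K) (pos ?K j + i)" by blast
    have inh: "pos ?K j + i < h (Suc ?K)" using pos_le_h[OF j(1)] i(1) by simp
    have "j = r ?K - 1"
    proof (rule ccontr)
      assume "j \<noteq> r ?K - 1"
      then have sj: "Suc j < r ?K" using j(1) by simp
      have "k < 2 ^ k" by (rule less_exp)
      also have "(2::nat) ^ k \<le> 2 ^ ?K" by (rule power_increasing) auto
      finally have "k \<le> 2 ^ ?K" by simp
      then have kh: "k \<le> h ?K" using h_ge[of ?K] by simp
      have "pos ?K j + h ?K + h ?K \<le> pos ?K (Suc j) + h ?K" by (simp add: pos_Suc)
      also have "\<dots> \<le> h (Suc ?K)" using pos_le_h[OF sj] .
      finally have "pos ?K j + i + k < h (Suc ?K)" using i(1) kh by simp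
      then show False using H[OF inh j(2)] by simp
    qed
    then have jr: "j + 1 = r ?K" using j(1) by simp
    have "c (Suc ?K) ! (pos ?K j + i) = c ?K ! i * r ?K + j" using c_copy[OF j(1) i(1)] .
    then have "(real (c (Suc ?K) ! (pos ?K j + i)) + 1) * w (Suc ?K)
        = (real (c ?K ! i) + 1) * (real (r ?K) * w (Suc ?K))"
    proof -
      have "real (r ?K) = real (j + 1)" using jr by simp
      then have rr: "real (r ?K) = real j + 1" by simp
      have "real (c ?K ! i * r ?K + j) + 1 = (real (c ?K ! i) + 1) * real (r ?K)"
        unfolding of_nat_add of_nat_mult rr by (simp add: algebra_simps)
      then show ?thesis using \<open>c (Suc ?K) ! (pos ?K j + i) = c ?K ! i * r ?K + j\<close> by simp
    qed
    also have "\<dots> = R" using i(3) w_Suc[of ?K] by simp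
    finally show ?case using inh j(2) by (intro exI[of _ "pos ?K j + i"]) simp
  qed
  have xR: "x < R" using i0 unfolding R_def L_def by simp
  from small_w[of "R - x" k] xR obtain d where d: "w (k + d) < R - x" by auto
  from claim[of d] obtain i where "x \<in> L (k + d) i" "(real (c (k + d) ! i) + 1) * w (k + d) = R" by blast
  then have "R - w (k + d) \<le> x" unfolding L_def by (simp add: algebra_simps)
  then show False using d by simp
qed

definition V where "V k = (\<Union>K. \<Union>i\<in>{i. i + k < h K \<and> c K ! i < P K}. L K (i + k))"

lemma image_F: "(T ^^ k) ` F = V k"
proof
  show "(T ^^ k) ` F \<subseteq> V k"
  proof
    fix y assume "y \<in> (T ^^ k) ` F"
    then obtain x where x: "x \<in> F" "y = (T ^^ k) x" by blast
    from F_good[OF x(1), of k] obtain K i where Ki: "i < h K" "x \<in> L K i" "i + k < h K" by blast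
    have "c K ! i < P K" using in_F_FL Ki x by blast
    moreover have "y \<in> L K (i + k)" using T_iter_mem[OF Ki(2,3)] x by simp
    ultimately show "y \<in> V k" unfolding V_def using Ki by blast
  qed
next
  show "V k \<subseteq> (T ^^ k) ` F"
  proof
    fix y assume "y \<in> V k"
    then obtain K i where Ki: "i + k < h K" "c K ! i < P K" "y \<in> L K (i + k)" unfolding V_def by blast
    define x where "x = y + (real (c K ! i) - real (c K ! (i + k))) * w K"
    have xL: "x \<in> L K i" unfolding x_def by (rule shiftL[OF Ki(3)])
    have "(T ^^ k) x = x + (real (c K ! (i + k)) - real (c K ! i)) * w K" by (rule T_iter[OF xL Ki(1)])
    then have "(T ^^ k) x = y" by (simp add: x_def algebra_simps)
    moreover have "x \<in> F" using FL_sub[OF Ki(2)] xL by blast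
    ultimately show "y \<in> (T ^^ k) ` F" by blast
  qed
qed

lemma L_borel: "L n i \<in> sets borel" unfolding L_def by simp

lemma V_borel: "V k \<in> sets borel"
  unfolding V_def using L_borel by (intro sets.countable_UN' sets.countable_UN) auto

definition X where "X = (\<Union>n. \<Union>i<h n. L n i)"

lemma X_borel: "X \<in> sets borel"
  unfolding X_def using L_borel by (intro sets.countable_UN sets.finite_UN) auto

lemma M_eq: "rk1_measure w0 r s = restrict_space lborel X"
  unfolding rk1_measure_def space_eq X_def ..

lemma X_sets: "X \<inter> space lborel \<in> sets lborel" using X_borel by simp

lemma space_M: "space (rk1_measure w0 r s) = X"
  unfolding M_eq space_restrict_space by simp

lemma F_X: "F \<subseteq> X"
proof
  fix x assume "x \<in> F"
  then have "x \<in> L 0 0" "0 < h 0" unfolding F_def using h_0 by auto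
  then show "x \<in> X" unfolding X_def by blast
qed

lemma sets_M: "A \<subseteq> X \<Longrightarrow> A \<in> sets borel \<Longrightarrow> A \<in> sets (rk1_measure w0 r s)"
  unfolding M_eq using sets_restrict_space_iff[OF X_sets] by simp

lemma measure_M: "A \<subseteq> X \<Longrightarrow> measure (rk1_measure w0 r s) A = measure lborel A"
  unfolding M_eq by (rule measure_restrict_space[OF X_sets])

lemma emeasure_M: "A \<subseteq> X \<Longrightarrow> emeasure (rk1_measure w0 r s) A = emeasure lborel A"
  unfolding M_eq by (rule emeasure_restrict_space[OF X_sets])

lemma emeasure_L: "emeasure lborel (L n i) = ennreal (w n)"
  unfolding L_def using w_pos[of n] by (simp add: algebra_simps)

lemma measure_L: "measure lborel (L n i) = w n"
  unfolding measure_def emeasure_L using w_pos[of n] by simp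

lemma emeasure_F: "emeasure lborel F = ennreal w0"
  using emeasure_L[of 0 0] unfolding F_def w_0 .

lemma measure_F: "measure lborel F = w0"
  using measure_L[of 0 0] unfolding F_def w_0 .

definition A where "A N k = {a. a + k < h N \<and> c N ! a < P N \<and> c N ! (a + k) < P N}"

lemma A_finite: "finite (A N k)" unfolding A_def by (rule finite_subset[of _ "{..<h N}"]) auto

lemma u_lower:
  "real (card (A N k)) * w N \<le> measure (rk1_measure w0 r s) (F \<inter> (T ^^ k) ` F)"
proof -
  define U where "U = (\<Union>a\<in>A N k. L N (a + k))"
  have UG: "U \<subseteq> F \<inter> (T ^^ k) ` F"
  proof
    fix y assume "y \<in> U"
    then obtain a where a: "a \<in> A N k" "y \<in> L N (a + k)" unfolding U_def by blast
    have "y \<in> F" using FL_sub[of N "a + k"] a unfolding A_def by blast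
    moreover have "y \<in> V k" unfolding V_def using a unfolding A_def by blast
    ultimately show "y \<in> F \<inter> (T ^^ k) ` F" unfolding image_F by blast
  qed
  have "F \<inter> V k \<in> sets borel" unfolding F_def using V_borel L_borel by auto
  then have GB: "F \<inter> (T ^^ k) ` F \<in> sets borel" unfolding image_F .
  have "measure lborel U = (\<Sum>a\<in>A N k. measure lborel (L N (a + k)))"
    unfolding U_def
  proof (rule measure_finite_Union[OF A_finite])
    show "(\<lambda>a. L N (a + k)) ` A N k \<subseteq> sets lborel" using L_borel by auto
    show "disjoint_family_on (\<lambda>a. L N (a + k)) (A N k)"
      unfolding disjoint_family_on_def A_def using L_disj by (auto simp: disjoint_iff) (metis add_right_cancel)
    show "\<And>a. a \<in> A N k \<Longrightarrow> emeasure lborel (L N (a + k)) \<noteq> \<infinity>" using emeasure_L by simp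
  qed
  also have "\<dots> = real (card (A N k)) * w N" by (simp add: measure_L)
  finally have mU: "measure lborel U = real (card (A N k)) * w N" .
  have "measure lborel U \<le> measure lborel (F \<inter> (T ^^ k) ` F)"
  proof (rule measure_mono_fmeasurable)
    show "U \<subseteq> F \<inter> (T ^^ k) ` F" by (rule UG)
    show "U \<in> sets lborel" unfolding U_def using L_borel A_finite by auto
    show "F \<inter> (T ^^ k) ` F \<in> fmeasurable lborel"
    proof (rule fmeasurableI2[of F])
      show "F \<in> fmeasurable lborel" using emeasure_F F_def L_borel by (auto intro: fmeasurableI)
    qed (use GB in auto)
  qed
  also have "\<dots> = measure (rk1_measure w0 r s) (F \<inter> (T ^^ k) ` F)"
    by (rule measure_M[symmetric]) (use F_X in blast)
  finally show ?thesis using mU by simp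
qed

end

context rk1 begin

lemma sum_A_ge: "real (P N) ^ 2 \<le> 2 * (\<Sum>k<h N. real (card (A N k)))"
proof -
  define Sg where "Sg = (SIGMA k:{..<h N}. A N k)"
  define Dg where "Dg = {(a, b). a \<in> FS N \<and> b \<in> FS N \<and> a \<le> b}"
  have finS: "finite Sg" unfolding Sg_def using A_finite by auto
  have cS: "card Sg = (\<Sum>k<h N. card (A N k))" unfolding Sg_def using A_finite by simp
  have "Dg \<subseteq> (\<lambda>(k, a). (a, a + k)) ` Sg"
  proof
    fix p assume "p \<in> Dg"
    then obtain a b where ab: "p = (a, b)" "a \<in> FS N" "b \<in> FS N" "a \<le> b" unfolding Dg_def by auto
    have "(b - a, a) \<in> Sg" using ab unfolding Sg_def A_def FS_def by auto
    moreover have "p = (\<lambda>(k, a). (a, a + k)) (b - a, a)" using ab by simp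
    ultimately show "p \<in> (\<lambda>(k, a). (a, a + k)) ` Sg" by blast
  qed
  then have "card Dg \<le> card ((\<lambda>(k, a). (a, a + k)) ` Sg)" using finS by (intro card_mono) auto
  also have "\<dots> \<le> card Sg" using finS by (rule card_image_le)
  finally have DS: "card Dg \<le> card Sg" .
  have finD: "finite Dg"
    by (rule finite_subset[of Dg "FS N \<times> FS N"]) (auto simp: Dg_def FS_finite)
  have "FS N \<times> FS N \<subseteq> Dg \<union> prod.swap ` Dg" unfolding Dg_def by auto
  then have "card (FS N \<times> FS N) \<le> card (Dg \<union> prod.swap ` Dg)" using finD by (intro card_mono) auto
  also have "\<dots> \<le> card Dg + card (prod.swap ` Dg)" by (rule card_Un_le)
  also have "\<dots> \<le> card Dg + card Dg" using card_image_le[OF finD, of prod.swap] by simp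
  finally have "card (FS N) * card (FS N) \<le> 2 * card Sg" using DS by (simp add: card_cartesian_product)
  moreover have "P N * P N \<le> card (FS N) * card (FS N)" using card_FS_ge by (intro mult_mono) auto
  ultimately have "P N * P N \<le> 2 * (\<Sum>k<h N. card (A N k))" using cS by simp
  then have "real (P N * P N) \<le> real (2 * (\<Sum>k<h N. card (A N k)))" by (simp only: of_nat_le_iff)
  then show ?thesis by (simp add: power2_eq_square)
qed

abbreviation M where "M \<equiv> rk1_measure w0 r s"

lemma measure_MF: "measure M F = w0"
  using measure_M[OF F_X] measure_F by simp

lemma a_lower:
  assumes "h N \<le> m"
  shows "real (P N) / (2 * w0) \<le> ret_a M T F m"
proof -
  have u_nn: "0 \<le> ret_u M T F k" for k unfolding ret_u_def by simp
  have "(\<Sum>k<h N. ret_u M T F k) \<le> ret_a M T F m"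
    unfolding ret_a_def using assms u_nn by (intro sum_mono2) auto
  moreover have "real (card (A N k)) * w N / w0 ^ 2 \<le> ret_u M T F k" for k
    unfolding ret_u_def measure_MF using u_lower[of N k] w0 by (intro divide_right_mono) auto
  then have "(\<Sum>k<h N. real (card (A N k)) * w N / w0 ^ 2) \<le> (\<Sum>k<h N. ret_u M T F k)"
    by (intro sum_mono) auto
  moreover have "(\<Sum>k<h N. real (card (A N k)) * w N / w0 ^ 2)
      = (\<Sum>k<h N. real (card (A N k))) * (w N / w0 ^ 2)"
    by (simp only: sum_distrib_right times_divide_eq_right sum_divide_distrib)
  moreover have "real (P N) / (2 * w0) \<le> (\<Sum>k<h N. real (card (A N k))) * (w N / w0 ^ 2)"
  proof -
    have wp: "0 \<le> w N / w0 ^ 2" using w_pos[of N] w0 by simp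
    have "real (P N) / (2 * w0) = (real (P N) ^ 2 / 2) * (w N / w0 ^ 2)"
      using P_w[of N] w0 by (simp add: field_simps power2_eq_square)
    also have "\<dots> \<le> (\<Sum>k<h N. real (card (A N k))) * (w N / w0 ^ 2)"
      using sum_A_ge[of N] wp by (intro mult_right_mono) auto
    finally show ?thesis .
  qed
  ultimately show ?thesis by linarith
qed

lemma indF_level: "y \<in> L K p \<Longrightarrow> indicator F y = (if c K ! p < P K then 1 else (0::real))"
  using FL_sub[of K p] nFL_disj[of K p] by (auto simp: indicator_def)

lemma S_upper:
  assumes "x \<in> L (n + d) i" "i + m \<le> h (n + d)" "m \<le> h n"
  shows "birk_S T m (indicator F) x \<le> 2 * real (P n)"
proof -
  let ?K = "n + d"
  define J where "J = {j. j < m \<and> c ?K ! (i + j) < P ?K}"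
  have "birk_S T m (indicator F) x = (\<Sum>j<m. indicator J j)"
    unfolding birk_S_def
  proof (rule sum.cong[OF refl])
    fix j assume "j \<in> {..<m}"
    then have ij: "i + j < h ?K" using assms(2) by simp
    have "indicator F ((T ^^ j) x) = (if c ?K ! (i + j) < P ?K then 1 else (0::real))"
      by (rule indF_level[OF T_iter_mem[OF assms(1) ij]])
    then show "indicator F ((T ^^ j) x) = (indicator J j :: real)"
      using \<open>j \<in> {..<m}\<close> unfolding J_def by (simp add: indicator_def)
  qed
  also have "\<dots> = (\<Sum>j\<in>{..<m} \<inter> J. (1::real))" by (simp add: sum.inter_restrict indicator_def)
  also have "\<dots> = real (card ({..<m} \<inter> J))" by simp
  also have "{..<m} \<inter> J = J" unfolding J_def by auto
  finally have SJ: "birk_S T m (indicator F) x = real (card J)" .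
  have "(\<lambda>j. i + j) ` J \<subseteq> {p. i \<le> p \<and> p < i + m \<and> p < h ?K \<and> c ?K ! p < P ?K}"
    unfolding J_def using assms(2) by auto
  then have "card ((\<lambda>j. i + j) ` J) \<le> card {p. i \<le> p \<and> p < i + m \<and> p < h ?K \<and> c ?K ! p < P ?K}"
    by (intro card_mono) auto
  also have "\<dots> \<le> 2 * P n" by (rule window_count[OF assms(3)])
  finally have "card J \<le> 2 * P n" by (simp add: card_image)
  then show ?thesis unfolding SJ by (metis of_nat_le_iff of_nat_mult of_nat_numeral)
qed

definition G where "G m = (\<Union>K. \<Union>i\<in>{i. i < h K \<and> i + m \<le> h K}. L K i)"

lemma good_push:
  assumes "x \<in> L K i" "i < h K" "i + m \<le> h K"
  shows "\<exists>i'. x \<in> L (K + d) i' \<and> i' < h (K + d) \<and> i' + m \<le> h (K + d)"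
proof (induction d)
  case 0 then show ?case using assms by auto
next
  case (Suc d)
  then obtain i' where i': "x \<in> L (K + d) i'" "i' < h (K + d)" "i' + m \<le> h (K + d)" by blast
  from L_refine[OF i'(2,1)] obtain j where j: "j < r (K+d)" "x \<in> L (Suc (K + d)) (pos (K+d) j + i')"
    by blast
  have "pos (K+d) j + h (K + d) \<le> h (Suc (K+d))" by (rule pos_le_h[OF j(1)])
  then show ?case using j i' by (intro exI[of _ "pos (K+d) j + i'"]) simp
qed

lemma good_at: "x \<in> G m \<Longrightarrow> \<exists>d i. x \<in> L (n + d) i \<and> i + m \<le> h (n + d)"
proof -
  assume "x \<in> G m"
  then obtain K i where Ki: "x \<in> L K i" "i < h K" "i + m \<le> h K" unfolding G_def by blast
  from good_push[OF Ki, of n] obtain i' where "x \<in> L (K + n) i'" "i' + m \<le> h (K + n)" by blast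
  then show ?thesis by (intro exI[of _ K] exI[of _ i']) (simp add: add.commute)
qed

lemma G_borel: "G m \<in> sets borel"
  unfolding G_def using L_borel by (intro sets.countable_UN sets.countable_UN') auto

lemma null_from_bound:
  assumes "B \<in> sets lborel" "\<And>d. emeasure lborel B \<le> ennreal (real m * w (K0 + d))"
  shows "B \<in> null_sets lborel"
proof -
  have fin: "emeasure lborel B \<noteq> top" using assms(2)[of 0] by (auto simp: top_unique)
  have eq: "emeasure lborel B = ennreal (measure lborel B)" by (rule emeasure_eq_ennreal_measure[OF fin])
  have le: "measure lborel B \<le> real m * w (K0 + d)" for d
    using assms(2)[of d] unfolding eq using w_pos[of "K0 + d"] by (simp add: ennreal_le_iff)
  have "measure lborel B \<le> 0"
  proof (rule ccontr)
    assume "\<not> measure lborel B \<le> 0"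
    then have pos: "0 < measure lborel B / (real m + 1)" by simp
    from small_w[OF pos, of K0] obtain d where d: "w (K0 + d) < measure lborel B / (real m + 1)" by blast
    have "real m * w (K0 + d) < measure lborel B"
    proof -
      have "real m * w (K0 + d) \<le> (real m + 1) * w (K0 + d)" using w_pos[of "K0 + d"] by simp
      also have "\<dots> < measure lborel B" using d by (simp add: field_simps)
      finally show ?thesis .
    qed
    then show False using le[of d] by simp
  qed
  then have "measure lborel B = 0" using measure_nonneg[of lborel B] by linarith
  then have "emeasure lborel B = 0" unfolding eq by simp
  then show ?thesis using assms(1) by (simp add: null_sets_def)
qed

lemma top_measure:
  "emeasure lborel (\<Union>i\<in>{i. i < h K \<and> h K < i + m}. L K i) \<le> ennreal (real m * w K)"
proof -
  define S where "S = {i. i < h K \<and> h K < i + m}"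
  have S: "S \<subseteq> {h K - m..<h K}" unfolding S_def by auto
  have finS: "finite S" using S by (rule finite_subset) simp
  have cS: "card S \<le> m" using card_mono[OF _ S] by simp
  have "emeasure lborel (\<Union>i\<in>S. L K i) \<le> (\<Sum>i\<in>S. emeasure lborel (L K i))"
    using finS L_borel by (intro emeasure_subadditive_finite) auto
  also have "\<dots> = ennreal (real (card S) * w K)" unfolding emeasure_L using w_pos[of K]
    by (simp add: ennreal_of_nat_eq_real_of_nat ennreal_mult)
  also have "\<dots> \<le> ennreal (real m * w K)" using cS w_pos[of K]
    by (intro ennreal_leI mult_right_mono) auto
  finally show ?thesis unfolding S_def .
qed

lemma AE_good: "AE x in M. x \<in> G m"
proof -
  define Y where "Y K0 = (\<Union>i<h K0. L K0 i)" for K0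
  have null: "Y K0 - G m \<in> null_sets lborel" for K0
  proof (rule null_from_bound[of "Y K0 - G m" m K0])
    show "Y K0 - G m \<in> sets lborel" unfolding Y_def using L_borel G_borel by auto
    fix d
    have "Y K0 - G m \<subseteq> (\<Union>i\<in>{i. i < h (K0 + d) \<and> h (K0 + d) < i + m}. L (K0 + d) i)"
    proof
      fix x assume x: "x \<in> Y K0 - G m"
      then obtain i0 where i0: "i0 < h K0" "x \<in> L K0 i0" unfolding Y_def by blast
      from level_push[OF i0(2,1), of d] obtain i where i: "i < h (K0 + d)" "x \<in> L (K0 + d) i" by blast
      have "h (K0 + d) < i + m"
      proof (rule ccontr)
        assume "\<not> h (K0 + d) < i + m"
        then have "x \<in> G m" unfolding G_def using i by force
        then show False using x by simp
      qed
      then show "x \<in> (\<Union>i\<in>{i. i < h (K0 + d) \<and> h (K0 + d) < i + m}. L (K0 + d) i)" using i by blast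
    qed
    then have "emeasure lborel (Y K0 - G m) \<le> emeasure lborel (\<Union>i\<in>{i. i < h (K0 + d) \<and> h (K0 + d) < i + m}. L (K0 + d) i)"
      using L_borel by (intro emeasure_mono) auto
    also have "\<dots> \<le> ennreal (real m * w (K0 + d))" by (rule top_measure)
    finally show "emeasure lborel (Y K0 - G m) \<le> ennreal (real m * w (K0 + d))" .
  qed
  have "(\<Union>K0. Y K0 - G m) \<in> null_sets lborel" using null by blast
  moreover have "{x \<in> space lborel. \<not> (x \<in> X \<longrightarrow> x \<in> G m)} \<subseteq> (\<Union>K0. Y K0 - G m)"
    unfolding X_def Y_def by auto
  ultimately have "AE x in lborel. x \<in> X \<longrightarrow> x \<in> G m" by (rule AE_I')
  then show ?thesis unfolding M_eq using AE_restrict_space_iff[OF X_sets] by simp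
qed

end


theorem mainTheorem10:
  fixes w0 :: real and r :: "nat \<Rightarrow> nat" and s :: "nat \<Rightarrow> nat \<Rightarrow> nat"
  assumes "0 < w0"
    and "\<forall>n. 2 \<le> r n"
    and "\<exists>B. \<forall>n. r n \<le> B"
  shows "bre_wrt (rk1_measure w0 r s) (rk1_T w0 r s) (rk1_level w0 r s 0 0)"
proof -
  interpret rk1 w0 r s using assms(1,2) by unfold_locales auto
  obtain B where B: "\<And>n. r n \<le> B" using assms(3) by blast
  have FB: "F \<in> sets borel" unfolding F_def by (rule L_borel)
  have cover: "space M - (\<Union>i. (T ^^ i) ` F) = {}"
  proof -
    have "x \<in> (\<Union>i. (T ^^ i) ` F)" if "x \<in> X" for x
    proof -
      from that obtain n i where ni: "i < h n" "x \<in> L n i" unfolding X_def by blast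
      define x0 where "x0 = x + (real (c n ! 0) - real (c n ! i)) * w n"
      have x0L: "x0 \<in> L n 0" unfolding x0_def by (rule shiftL[OF ni(2)])
      have "c n ! 0 < P n" using c_zero[of n] P_pos[of n] by simp
      then have "x0 \<in> F" using FL_sub x0L by blast
      moreover have "(T ^^ i) x0 = x" using T_iter[of x0 n 0 i] x0L ni(1) by (simp add: x0_def algebra_simps)
      ultimately show ?thesis by blast
    qed
    then show ?thesis unfolding space_M by blast
  qed
  show ?thesis unfolding bre_wrt_def F_level0
  proof (intro conjI)
    show "F \<in> sets M" using sets_M[OF F_X FB] .
    show "0 < emeasure M F" using emeasure_M[OF F_X] emeasure_F assms(1) by simp
    show "emeasure M F < \<infinity>" using emeasure_M[OF F_X] emeasure_F by simp
    show "emeasure M (space M - (\<Union>i. (T ^^ i) ` F)) = 0" unfolding cover by simp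
    show "\<exists>C. \<forall>n\<ge>1. AE x in M. \<bar>birk_S T n (indicator F) x / ret_a M T F n\<bar> \<le> C"
    proof (intro exI allI impI)
      fix m :: nat assume m: "1 \<le> m"
      define Sn where "Sn = {n. h n \<le> m}"
      have S0: "0 \<in> Sn" unfolding Sn_def using h_0 m by simp
      have Ssub: "Sn \<subseteq> {..m}"
      proof
        fix n assume "n \<in> Sn"
        then have "h n \<le> m" unfolding Sn_def by simp
        moreover have "n < 2 ^ n" by (rule less_exp)
        ultimately show "n \<in> {..m}" using h_ge[of n] unfolding atMost_iff by linarith
      qed
      have finSn: "finite Sn" using Ssub by (rule finite_subset) simp
      define N where "N = Max Sn"
      have hN: "h N \<le> m" using Max_in[OF finSn] S0 unfolding N_def Sn_def by auto
      have hSN: "m < h (Suc N)"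
      proof (rule ccontr)
        assume "\<not> m < h (Suc N)"
        then have "Suc N \<in> Sn" unfolding Sn_def by simp
        then have "Suc N \<le> N" unfolding N_def using Max_ge[OF finSn] by blast
        then show False by simp
      qed
      define a where "a = ret_a M T F m"
      have alow: "real (P N) / (2 * w0) \<le> a" unfolding a_def by (rule a_lower[OF hN])
      have PNp: "0 < real (P N)" using P_pos[of N] by simp
      have apos: "0 < a" using alow PNp assms(1) by (smt (verit) divide_pos_pos)
      show "AE x in M. \<bar>birk_S T m (indicator F) x / ret_a M T F m\<bar> \<le> 4 * real B * w0"
        using AE_good[of m]
      proof (rule eventually_mono)
        fix x assume "x \<in> G m"
        from good_at[OF this, of "Suc N"] obtain d i where di:
          "x \<in> L (Suc N + d) i" "i + m \<le> h (Suc N + d)" by blast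
        have "birk_S T m (indicator F) x \<le> 2 * real (P (Suc N))"
          by (rule S_upper[OF di]) (use hSN in simp)
        also have "\<dots> \<le> 2 * real (P N) * real B"
          using B[of N] PNp unfolding P_Suc by simp
        finally have Sup: "birk_S T m (indicator F) x \<le> 2 * real (P N) * real B" .
        have Snn: "0 \<le> birk_S T m (indicator F) x" unfolding birk_S_def by (intro sum_nonneg) simp
        have "\<bar>birk_S T m (indicator F) x / a\<bar> = birk_S T m (indicator F) x / a"
          using Snn apos by simp
        also have "\<dots> \<le> 2 * real (P N) * real B / a"
          using Sup apos by (intro divide_right_mono) auto
        also have "\<dots> \<le> 2 * real (P N) * real B / (real (P N) / (2 * w0))"
          using alow PNp assms(1) apos by (intro divide_left_mono) (auto intro!: mult_pos_pos divide_pos_pos)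
        also have "\<dots> = 4 * real B * w0" using PNp assms(1) by (simp add: field_simps)
        finally show "\<bar>birk_S T m (indicator F) x / ret_a M T F m\<bar> \<le> 4 * real B * w0"
          unfolding a_def .
      qed
    qed
  qed
qed


end
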